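(* Let $G$ be a digraph and $f$ a discrete Morse function on $G$ such that every vertex $v$ with $f(v)=0$ has out-degree $1$ and in-degree $1$. Then for every pair $(\alpha,\beta)\in\mathcal M(G,f)$ there is a vertex $v$ with $f(v)=0$, with unique in-neighbour $u$ and unique out-neighbour $w$ (so $u\to v\to w$), such that one of the following holds: (1) $\alpha=x_1\cdots x_p\,u\,w\,y_1\cdots y_q$ and $\beta=x_1\cdots x_p\,u\,v\,w\,y_1\cdots y_q$ for some (possibly empty) sequences $x_1\cdots x_p$, $y_1\cdots y_q$; (2) $\alpha$ ends at $u$ and $\beta=\alpha v$ (i.e. $\beta=\cdots u\,v$); (3) $\alpha$ starts at $w$ and $\beta=v\alpha$ (i.e. $\beta=v\,w\cdots$).
   Context: A digraph $G=(V,E)$ consists of a set $V$ and $E\subseteq(V\times V)\setminus\{(v,v)\}$; $(u,v)\in E$ is written $u\to v$. The out-degree (in-degree) of $v$ is the number of edges starting (ending) at $v$. An allowed elementary $n$-path is a sequence $v_0\cdots v_n$ of vertices with $v_{i-1}\to v_i\in E$ for $1\le i\le n$. For allowed elementary paths, $\gamma'<\gamma$ means $\gamma'$ is obtained from $\gamma$ by deleting some entries. A map $f:V\to[0,+\infty)$ is a discrete Morse function on $G$ if for every allowed elementary path $v_0\cdots v_n$: (i) there is at most one index $i$ with $f(v_i)=0$ such that $v_0\cdots v_{i-1}v_{i+1}\cdots v_n$ is an allowed elementary $(n-1)$-path; (ii) there is at most one vertex $u$ with $f(u)=0$ such that for some $-1\le j\le n$ the sequence $v_0\cdots v_juv_{j+1}\cdots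 v_n$ (meaning $uv_0\cdots v_n$ if $j=-1$, $v_0\cdots v_nu$ if $j=n$) is an allowed elementary $(n+1)$-path. Set $f(v_0\cdots v_n)=\sum_if(v_i)$. $\mathcal M(G,f)$ is the set of pairs $(\alpha,\beta)$ with $\alpha$ an allowed elementary $n$-path, $\beta$ an allowed elementary $(n+1)$-path for some $n\ge0$, $\alpha<\beta$ and $f(\alpha)=f(\beta)$. *)

theory Defs
  imports Complex_Main "HOL-Library.Sublist"
begin

definition digraph :: "'a set \<Rightarrow> ('a \<times> 'a) set \<Rightarrow> bool" where
  "digraph V E \<longleftrightarrow> E \<subseteq> (V \<times> V) - {(v, v) | v. True}"

definition out_degree :: "('a \<times> 'a) set \<Rightarrow> 'a \<Rightarrow> nat" where
  "out_degree E v = card {w. (v, w) \<in> E}"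

definition in_degree :: "('a \<times> 'a) set \<Rightarrow> 'a \<Rightarrow> nat" where
  "in_degree E v = card {u. (u, v) \<in> E}"

definition allowed_path :: "'a set \<Rightarrow> ('a \<times> 'a) set \<Rightarrow> nat \<Rightarrow> 'a list \<Rightarrow> bool" where
  "allowed_path V E n p \<longleftrightarrow> length p = Suc n \<and> set p \<subseteq> V \<and>
     (\<forall>i < n. (p ! i, p ! Suc i) \<in> E)"

definition discrete_morse :: "'a set \<Rightarrow> ('a \<times> 'a) set \<Rightarrow> ('a \<Rightarrow> real) \<Rightarrow> bool" where
  "discrete_morse V E f \<longleftrightarrow>
     (\<forall>v\<in>V. f v \<ge> 0) \<and>
     (\<forall>n p. allowed_path V E n p \<longrightarrow>
        (\<forall>i j. i \<le> n \<and> j \<le> n \<and> f (p ! i) = 0 \<and> f (p ! j) = 0 \<and>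
               n \<ge> 1 \<and> allowed_path V E (n - 1) (take i p @ drop (Suc i) p) \<and>
               allowed_path V E (n - 1) (take j p @ drop (Suc j) p) \<longrightarrow> i = j)) \<and>
     (\<forall>n p. allowed_path V E n p \<longrightarrow>
        (\<forall>u u'. u \<in> V \<and> u' \<in> V \<and> f u = 0 \<and> f u' = 0 \<and>
               (\<exists>k \<le> Suc n. allowed_path V E (Suc n) (take k p @ u # drop k p)) \<and>
               (\<exists>k \<le> Suc n. allowed_path V E (Suc n) (take k p @ u' # drop k p)) \<longrightarrow> u = u'))"

definition path_value :: "('a \<Rightarrow> real) \<Rightarrow> 'a list \<Rightarrow> real" where
  "path_value f p = sum_list (map f p)"

definition morse_pairs :: "'a set \<Rightarrow> ('a \<times> 'a) set \<Rightarrow> ('a \<Rightarrow> real) \<Rightarrow> ('a list \<times> 'a list) set" where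
  "morse_pairs V E f = {(\<alpha>, \<beta>). \<exists>n. allowed_path V E n \<alpha> \<and> allowed_path V E (Suc n) \<beta> \<and>
      subseq \<alpha> \<beta> \<and> path_value f \<alpha> = path_value f \<beta>}"

end

theory Submission
  imports Defs
begin

lemma subseq_one_more:
  "subseq a b \<Longrightarrow> length b = Suc (length a) \<Longrightarrow> \<exists>xs ys v. a = xs @ ys \<and> b = xs @ v # ys"
proof (induction b arbitrary: a)
  case Nil then show ?case by simp
next
  case (Cons c bs)
  note IH = Cons.IH and P = Cons.prems
  show ?case
  proof (cases a)
    case Nil
    then have h1: "a = [] @ [] \<and> c # bs = [] @ c # []" using P by simp
    show ?thesis by (intro exI) (rule h1)
  next
    case (Cons x as)
    show ?thesis
    proof (cases "x = c")
      case True
      have s1: "subseq as bs" using P(1) unfolding \<open>a = x # as\<close> True by (rule subseq_Cons2')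
      have l1: "length bs = Suc (length as)" using P(2) \<open>a = x # as\<close> by simp
      obtain xs ys v where "as = xs @ ys" "bs = xs @ v # ys" using IH[OF s1 l1] by (elim exE conjE)
      then have h2: "a = (c # xs) @ ys \<and> c # bs = (c # xs) @ v # ys" using True \<open>a = x # as\<close> by simp
      show ?thesis by (intro exI) (rule h2)
    next
      case False
      have s2: "subseq a bs" using P(1) unfolding \<open>a = x # as\<close> by (rule subseq_Cons2_neq[OF _ False])
      have l2: "length a = length bs" using P(2) by simp
      have "a = bs" using subseq_same_length[OF s2 l2] .
      then have h3: "a = [] @ a \<and> c # bs = [] @ c # a" by simp
      show ?thesis by (intro exI) (rule h3)
    qed
  qed
qed

lemma edge_mid:
  assumes "allowed_path V E n p" "p = a @ [x, y] @ b"
  shows "(x, y) \<in> E"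
proof -
  have "length a < n" using assms unfolding allowed_path_def by simp
  then have "(p ! length a, p ! Suc (length a)) \<in> E" using assms unfolding allowed_path_def by blast
  then show ?thesis using assms(2) by (simp add: nth_append)
qed

lemma card1_ex: "card S = 1 \<Longrightarrow> \<exists>x. x \<in> S"
  by (metis card_1_singletonE singletonI)

theorem lemma6p1:
  fixes V :: "'a set" and E :: "('a \<times> 'a) set" and f :: "'a \<Rightarrow> real"
  assumes "digraph V E"
    and "discrete_morse V E f"
    and "\<forall>v\<in>V. f v = 0 \<longrightarrow> out_degree E v = 1 \<and> in_degree E v = 1"
    and "(\<alpha>, \<beta>) \<in> morse_pairs V E f"
  shows "\<exists>v\<in>V. f v = 0 \<and> (\<exists>u w. (u, v) \<in> E \<and> (v, w) \<in> E \<and>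
           ((\<exists>xs ys. \<alpha> = xs @ [u, w] @ ys \<and> \<beta> = xs @ [u, v, w] @ ys) \<or>
            (\<exists>xs. \<alpha> = xs @ [u] \<and> \<beta> = \<alpha> @ [v]) \<or>
            (\<exists>ys. \<alpha> = w # ys \<and> \<beta> = v # \<alpha>)))"
proof -
  obtain n where pa: "allowed_path V E n \<alpha>" and pb: "allowed_path V E (Suc n) \<beta>"
    and sq: "subseq \<alpha> \<beta>" and pv: "path_value f \<alpha> = path_value f \<beta>"
    using assms(4) unfolding morse_pairs_def by blast
  have len: "length \<beta> = Suc (length \<alpha>)" using pa pb unfolding allowed_path_def by simp
  obtain xs ys v where a: "\<alpha> = xs @ ys" and b: "\<beta> = xs @ v # ys"
    using subseq_one_more[OF sq len] by (elim exE conjE)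
  have fv: "f v = 0" using pv a b unfolding path_value_def by simp
  have vV: "v \<in> V" using pb b unfolding allowed_path_def by auto
  have deg: "out_degree E v = 1" "in_degree E v = 1" using assms(3) vV fv by auto
  obtain u0 where u0: "(u0, v) \<in> E" using card1_ex[OF deg(2)[unfolded in_degree_def]] by auto
  obtain w0 where w0: "(v, w0) \<in> E" using card1_ex[OF deg(1)[unfolded out_degree_def]] by auto
  have ne: "\<alpha> \<noteq> []" using pa unfolding allowed_path_def by auto
  show ?thesis
  proof (cases "xs = []")
    case True
    then obtain w ys' where ys: "ys = w # ys'" using ne a by (cases ys) simp_all
    have "(v, w) \<in> E" using edge_mid[OF pb, of "[]" v w ys'] b True ys by simp
    have "\<alpha> = w # ys' \<and> \<beta> = v # \<alpha>" using a b True ys by simp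
    then show ?thesis using vV fv u0 \<open>(v, w) \<in> E\<close>
      by (intro bexI[of _ v] conjI exI[of _ u0] exI[of _ w] disjI2[OF disjI2] exI[of _ ys']) simp_all
  next
    case False
    then obtain xs' u where xs: "xs = xs' @ [u]" by (metis rev_exhaust)
    have uv: "(u, v) \<in> E" using edge_mid[OF pb, of xs' u v ys] b xs by simp
    show ?thesis
    proof (cases ys)
      case Nil
      have "\<alpha> = xs' @ [u] \<and> \<beta> = \<alpha> @ [v]" using a b xs Nil by simp
      then show ?thesis using vV fv uv w0
        by (intro bexI[of _ v] conjI exI[of _ u] exI[of _ w0] disjI2[OF disjI1] exI[of _ xs']) simp_all
    next
      case (Cons w ys')
      have "(v, w) \<in> E" using edge_mid[OF pb, of "xs' @ [u]" v w ys'] b xs Cons by simp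
      moreover have "\<alpha> = xs' @ [u, w] @ ys' \<and> \<beta> = xs' @ [u, v, w] @ ys'" using a b xs Cons by simp
      ultimately show ?thesis using vV fv uv
        by (intro bexI[of _ v] conjI exI[of _ u] exI[of _ w] disjI1 exI[of _ xs'] exI[of _ ys']) simp_all
    qed
  qed
qed

end
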